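(* Let $q=(q_1,q_2,q_3)\in K^3$. There exists a linear endomorphism $\varphi_q$ of $\mathbf{WQSym}$ such that $\varphi_q\circ L=\Gamma_q$ if, and only if, $q=(1,0,0)$ or $q=(0,1,0)$.
   Context: Let $K$ be a field; convention $0^0=1$. For $n\geq0$, $[n]=\{1,\ldots,n\}$, $\mathbb{T}_n$ is the set of topologies on $[n]$ and $\mathcal{H}_{\mathbb{T}}$ the $K$-vector space with basis $\bigsqcup_n\mathbb{T}_n$. For a topology $\mathcal{T}$ on $[n]$: $i\leq_{\mathcal{T}}j$ iff every open set containing $i$ contains $j$; $i\sim_{\mathcal{T}}j$ iff $i\leq_{\mathcal{T}}j$ and $j\leq_{\mathcal{T}}i$; $i<_{\mathcal{T}}j$ iff $i\leq_{\mathcal{T}}j$ and not $j\leq_{\mathcal{T}}i$. A packed word of length $n$ is a word $f=f(1)\ldots f(n)$ of positive integers with $\{f(1),\ldots,f(n)\}=[\max f]$; $\mathbf{WQSym}$ is the $K$-vector space with basis the packed words. A linear extension of $\mathcal{T}\in\mathbb{T}_n$ is a packed word $f$ of length $n$ with $f(i)=f(j)\Leftrightarrow i\sim_{\mathcal{T}}j$ and $i<_{\mathcal{T}}j\Rightarrow f(i)<f(j)$; $\mathcal{L}(\mathcal{T})$ is their set and $L$ is the linear map $\mathcal{H}_{\mathbb{T}}\to\mathbf{WQSym}$, $L(\mathcal{T})=\sum_{f\in\mathcal{L}(\mathcal{T})}f$. A generalized T-partition of $\mathcal{T}\in\mathbb{T}_n$ is a packed word $f$ of length $n$ with $i\leq_{\mathcal{T}}j\Rightarrow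 f(i)\leq f(j)$; $\mathcal{P}(\mathcal{T})$ is their set. For $f\in\mathcal{P}(\mathcal{T})$: $\ell_1(f)=\sharp\{(i,j)\mid i<_{\mathcal{T}}j,\ i<j,\ f(i)=f(j)\}$; $\ell_2(f)=\sharp\{(i,j)\mid i<_{\mathcal{T}}j,\ i>j,\ f(i)=f(j)\}$; $\ell_3(f)=\sharp\{(i,j,k)\mid i<j<k,\ i\sim_{\mathcal{T}}k,\ \text{not }i\sim_{\mathcal{T}}j,\ \text{not }j\sim_{\mathcal{T}}k,\ f(i)=f(j)=f(k)\}$. $\Gamma_q:\mathcal{H}_{\mathbb{T}}\to\mathbf{WQSym}$ is the linear map $\Gamma_q(\mathcal{T})=\sum_{f\in\mathcal{P}(\mathcal{T})}q_1^{\ell_1(f)}q_2^{\ell_2(f)}q_3^{\ell_3(f)}f$. *)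

theory Defs
  imports "HOL-Analysis.Analysis"
begin

text \<open>Topologies on [n] = {1..n} are the library topologies on nat with topspace {1..n}.
  Words f(1)...f(n) are lists; the letter f(i) is the list entry at position i-1.\<close>

definition top_on :: "nat \<Rightarrow> nat topology \<Rightarrow> bool" where
  "top_on n T \<longleftrightarrow> topspace T = {1..n}"

definition is_fintop :: "nat topology \<Rightarrow> bool" where
  "is_fintop T \<longleftrightarrow> (\<exists>n. top_on n T)"

definition tle :: "nat topology \<Rightarrow> nat \<Rightarrow> nat \<Rightarrow> bool" where
  "tle T i j \<longleftrightarrow> (\<forall>U. openin T U \<and> i \<in> U \<longrightarrow> j \<in> U)"

definition tsim :: "nat topology \<Rightarrow> nat \<Rightarrow> nat \<Rightarrow> bool" where
  "tsim T i j \<longleftrightarrow> tle T i j \<and> tle T j i"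

definition tlt :: "nat topology \<Rightarrow> nat \<Rightarrow> nat \<Rightarrow> bool" where
  "tlt T i j \<longleftrightarrow> tle T i j \<and> \<not> tle T j i"

definition letter :: "nat list \<Rightarrow> nat \<Rightarrow> nat" where
  "letter f i = f ! (i - 1)"

definition packed :: "nat list \<Rightarrow> bool" where
  "packed f \<longleftrightarrow> (\<exists>m. set f = {1..m})"

definition lin_ext :: "nat topology \<Rightarrow> nat list set" where
  "lin_ext T = {f. packed f \<and> top_on (length f) T \<and>
     (\<forall>i\<in>{1..length f}. \<forall>j\<in>{1..length f}.
        (letter f i = letter f j \<longleftrightarrow> tsim T i j) \<and>
        (tlt T i j \<longrightarrow> letter f i < letter f j))}"

definition gen_part :: "nat topology \<Rightarrow> nat list set" where
  "gen_part T = {f. packed f \<and> top_on (length f) T \<and>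
     (\<forall>i\<in>{1..length f}. \<forall>j\<in>{1..length f}. tle T i j \<longrightarrow> letter f i \<le> letter f j)}"

definition ell1 :: "nat topology \<Rightarrow> nat list \<Rightarrow> nat" where
  "ell1 T f = card {(i, j). i \<in> {1..length f} \<and> j \<in> {1..length f} \<and>
      tlt T i j \<and> i < j \<and> letter f i = letter f j}"

definition ell2 :: "nat topology \<Rightarrow> nat list \<Rightarrow> nat" where
  "ell2 T f = card {(i, j). i \<in> {1..length f} \<and> j \<in> {1..length f} \<and>
      tlt T i j \<and> i > j \<and> letter f i = letter f j}"

definition ell3 :: "nat topology \<Rightarrow> nat list \<Rightarrow> nat" where
  "ell3 T f = card {(i, j, k). i \<in> {1..length f} \<and> j \<in> {1..length f} \<and> k \<in> {1..length f} \<and>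
      i < j \<and> j < k \<and> tsim T i k \<and> \<not> tsim T i j \<and> \<not> tsim T j k \<and>
      letter f i = letter f j \<and> letter f j = letter f k}"

text \<open>The vector space H_T: finitely supported K-valued functions on topologies on some [n]
  (coordinates w.r.t. the basis). WQSym: finitely supported K-valued functions on packed words.\<close>

definition HT :: "(nat topology \<Rightarrow> 'a::field) set" where
  "HT = {x. finite {T. x T \<noteq> 0} \<and> (\<forall>T. x T \<noteq> 0 \<longrightarrow> is_fintop T)}"

definition WQSym :: "(nat list \<Rightarrow> 'a::field) set" where
  "WQSym = {x. finite {w. x w \<noteq> 0} \<and> (\<forall>w. x w \<noteq> 0 \<longrightarrow> packed w)}"

definition linear_endo_WQSym :: "((nat list \<Rightarrow> 'a::field) \<Rightarrow> (nat list \<Rightarrow> 'a)) \<Rightarrow> bool" where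
  "linear_endo_WQSym \<phi> \<longleftrightarrow>
     (\<forall>x\<in>WQSym. \<phi> x \<in> WQSym) \<and>
     (\<forall>x\<in>WQSym. \<forall>y\<in>WQSym. \<phi> (\<lambda>w. x w + y w) = (\<lambda>w. \<phi> x w + \<phi> y w)) \<and>
     (\<forall>c. \<forall>x\<in>WQSym. \<phi> (\<lambda>w. c * x w) = (\<lambda>w. c * \<phi> x w))"

definition L_basis :: "nat topology \<Rightarrow> nat list \<Rightarrow> 'a::field" where
  "L_basis T = (\<lambda>w. if w \<in> lin_ext T then 1 else 0)"

definition Gamma_basis :: "'a::field \<Rightarrow> 'a \<Rightarrow> 'a \<Rightarrow> nat topology \<Rightarrow> nat list \<Rightarrow> 'a" where
  "Gamma_basis q1 q2 q3 T = (\<lambda>w. if w \<in> gen_part T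
       then q1 ^ ell1 T w * q2 ^ ell2 T w * q3 ^ ell3 T w else 0)"

definition L_map :: "(nat topology \<Rightarrow> 'a::field) \<Rightarrow> nat list \<Rightarrow> 'a" where
  "L_map x = (\<lambda>w. \<Sum>T\<in>{T. x T \<noteq> 0}. x T * L_basis T w)"

definition Gamma_map :: "'a::field \<Rightarrow> 'a \<Rightarrow> 'a \<Rightarrow> (nat topology \<Rightarrow> 'a) \<Rightarrow> nat list \<Rightarrow> 'a" where
  "Gamma_map q1 q2 q3 x = (\<lambda>w. \<Sum>T\<in>{T. x T \<noteq> 0}. x T * Gamma_basis q1 q2 q3 T w)"

end

theory Submission
  imports Defs
begin

definition ptop :: "nat \<Rightarrow> (nat \<Rightarrow> nat \<Rightarrow> bool) \<Rightarrow> nat topology" where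
  "ptop n P = topology (\<lambda>U. U \<subseteq> {1..n} \<and> (\<forall>i\<in>U. \<forall>j\<in>{1..n}. P i j \<longrightarrow> j \<in> U))"

lemma istop_ptop: "istopology (\<lambda>U. U \<subseteq> {1..n} \<and> (\<forall>i\<in>U. \<forall>j\<in>{1..n}. P i j \<longrightarrow> j \<in> U))"
  unfolding istopology_def by blast

lemma openin_ptop: "openin (ptop n P) U \<longleftrightarrow> U \<subseteq> {1..n} \<and> (\<forall>i\<in>U. \<forall>j\<in>{1..n}. P i j \<longrightarrow> j \<in> U)"
  unfolding ptop_def using istop_ptop[of n P] by simp

lemma top_on_ptop: "top_on n (ptop n P)"
  unfolding top_on_def topspace_def openin_ptop by blast

lemma tle_ptop:
  assumes "i \<in> {1..n}" "j \<in> {1..n}" "\<And>k. k \<in> {1..n} \<Longrightarrow> P k k"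
    "\<And>a b c. a \<in> {1..n} \<Longrightarrow> b \<in> {1..n} \<Longrightarrow> c \<in> {1..n} \<Longrightarrow> P a b \<Longrightarrow> P b c \<Longrightarrow> P a c"
  shows "tle (ptop n P) i j \<longleftrightarrow> P i j"
proof
  assume "tle (ptop n P) i j"
  moreover have "openin (ptop n P) {k\<in>{1..n}. P i k}"
    unfolding openin_ptop using assms(1,4) by blast
  ultimately show "P i j" using assms unfolding tle_def by blast
next
  assume "P i j" then show "tle (ptop n P) i j"
    unfolding tle_def openin_ptop using assms(2) by blast
qed


lemma tle_refl[simp]: "tle T i i" unfolding tle_def by blast
lemma tle_trans: "tle T i j \<Longrightarrow> tle T j k \<Longrightarrow> tle T i k" unfolding tle_def by blast
lemma tsim_refl[simp]: "tsim T i i" unfolding tsim_def by simp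
lemma tsim_sym: "tsim T i j \<Longrightarrow> tsim T j i" unfolding tsim_def by simp
lemma tsim_trans: "tsim T i j \<Longrightarrow> tsim T j k \<Longrightarrow> tsim T i k" unfolding tsim_def using tle_trans by blast
lemma tlt_irrefl[simp]: "\<not> tlt T i i" unfolding tlt_def by simp

lemma packed_set: "packed f \<Longrightarrow> set f = {1..card (set f)}"
  unfolding packed_def by auto

lemma packed_le_len: "packed f \<Longrightarrow> x \<in> set f \<Longrightarrow> x \<le> length f \<and> 1 \<le> x"
proof -
  assume p: "packed f" and x: "x \<in> set f"
  have "x \<in> {1..card (set f)}" using packed_set[OF p] x by simp
  moreover have "card (set f) \<le> length f" by (rule card_length)
  ultimately show ?thesis by auto
qed

lemma letter_in: "i \<in> {1..length f} \<Longrightarrow> letter f i \<in> set f"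
  unfolding letter_def by auto

lemma set_letter: "set f = (\<lambda>i. letter f i) ` {1..length f}"
proof
  show "set f \<subseteq> (\<lambda>i. letter f i) ` {1..length f}"
  proof
    fix x assume "x \<in> set f"
    then obtain k where "k < length f" "f ! k = x" by (auto simp: in_set_conv_nth)
    then show "x \<in> (\<lambda>i. letter f i) ` {1..length f}"
      unfolding letter_def by (intro image_eqI[of _ _ "Suc k"]) auto
  qed
qed (use letter_in in auto)

lemma packed_card:
  assumes p: "packed f" and i: "i \<in> {1..length f}"
  shows "letter f i = card ((\<lambda>j. letter f j) ` {j\<in>{1..length f}. letter f j \<le> letter f i})"
proof -
  have "(\<lambda>j. letter f j) ` {j\<in>{1..length f}. letter f j \<le> letter f i} = {x\<in>set f. x \<le> letter f i}"
    using set_letter[of f] by auto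
  also have "\<dots> = {1..letter f i}"
  proof -
    obtain m where s: "set f = {1..m}" using p unfolding packed_def by blast
    show ?thesis using letter_in[OF i] unfolding s by auto
  qed
  finally show ?thesis by simp
qed

lemma card_image_transfer:
  assumes "\<And>j k. j \<in> S \<Longrightarrow> k \<in> S \<Longrightarrow> f j = f k \<Longrightarrow> g j = g k" "finite S"
  shows "card (g ` S) \<le> card (f ` S)"
proof -
  define \<theta> where "\<theta> v = g (SOME j. j \<in> S \<and> f j = v)" for v
  have "g ` S \<subseteq> \<theta> ` (f ` S)"
  proof
    fix y assume "y \<in> g ` S"
    then obtain j where j: "j \<in> S" "y = g j" by auto
    have "\<exists>k. k \<in> S \<and> f k = f j" using j by auto
    then have "(SOME k. k \<in> S \<and> f k = f j) \<in> S \<and> f (SOME k. k \<in> S \<and> f k = f j) = f j"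
      by (rule someI_ex)
    then have "\<theta> (f j) = y" unfolding \<theta>_def using assms(1) j by metis
    moreover have "f j \<in> f ` S" using j by simp
    ultimately show "y \<in> \<theta> ` (f ` S)" by (metis image_eqI)
  qed
  then have "card (g ` S) \<le> card (\<theta> ` (f ` S))"
    by (intro card_mono) (use assms(2) in auto)
  also have "\<dots> \<le> card (f ` S)" by (rule card_image_le) (use assms(2) in auto)
  finally show ?thesis .
qed

lemma packed_unique:
  assumes pf: "packed f" and pg: "packed g" and len: "length f = length g"
    and eq: "\<And>i j. i \<in> {1..length f} \<Longrightarrow> j \<in> {1..length f} \<Longrightarrow>
        letter f i \<le> letter f j \<longleftrightarrow> letter g i \<le> letter g j"
  shows "f = g"
proof -
  have L: "letter f i = letter g i" if i: "i \<in> {1..length f}" for i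
  proof -
    define S where "S = {j\<in>{1..length f}. letter f j \<le> letter f i}"
    have S': "S = {j\<in>{1..length g}. letter g j \<le> letter g i}"
      unfolding S_def using eq i len by auto
    have fin: "finite S" unfolding S_def by auto
    have Sr: "S \<subseteq> {1..length f}" unfolding S_def by auto
    have "letter f i = card ((\<lambda>j. letter f j) ` S)" unfolding S_def by (rule packed_card[OF pf i])
    moreover have "letter g i = card ((\<lambda>j. letter g j) ` S)" unfolding S' 
      by (rule packed_card[OF pg]) (use i len in auto)
    moreover have "card ((\<lambda>j. letter g j) ` S) \<le> card ((\<lambda>j. letter f j) ` S)"
    proof (rule card_image_transfer[OF _ fin])
      fix j k assume jk: "j \<in> S" "k \<in> S" "letter f j = letter f k"
      have "j \<in> {1..length f}" "k \<in> {1..length f}" using jk Sr by auto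
      then have "letter g j \<le> letter g k" "letter g k \<le> letter g j" using eq[of j k] eq[of k j] jk(3) by auto
      then show "letter g j = letter g k" by simp
    qed
    moreover have "card ((\<lambda>j. letter f j) ` S) \<le> card ((\<lambda>j. letter g j) ` S)"
    proof (rule card_image_transfer[OF _ fin])
      fix j k assume jk: "j \<in> S" "k \<in> S" "letter g j = letter g k"
      have "j \<in> {1..length f}" "k \<in> {1..length f}" using jk Sr by auto
      then have "letter f j \<le> letter f k" "letter f k \<le> letter f j" using eq[of j k] eq[of k j] jk(3) by auto
      then show "letter f j = letter f k" by simp
    qed
    ultimately show ?thesis by simp
  qed
  show ?thesis
  proof (rule nth_equalityI)
    show "length f = length g" by (rule len)
    fix k assume "k < length f"
    then have "letter f (Suc k) = letter g (Suc k)" by (intro L) auto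
    then show "f ! k = g ! k" unfolding letter_def by simp
  qed
qed


definition Tw :: "nat list \<Rightarrow> nat topology" where
  "Tw f = ptop (length f) (\<lambda>i j. letter f i \<le> letter f j)"

lemma tle_Tw: "i \<in> {1..length f} \<Longrightarrow> j \<in> {1..length f} \<Longrightarrow> tle (Tw f) i j \<longleftrightarrow> letter f i \<le> letter f j"
  unfolding Tw_def by (rule tle_ptop) auto

lemma tsim_Tw: "i \<in> {1..length f} \<Longrightarrow> j \<in> {1..length f} \<Longrightarrow> tsim (Tw f) i j \<longleftrightarrow> letter f i = letter f j"
  unfolding tsim_def using tle_Tw by (metis le_antisym order_refl)

lemma tlt_Tw: "i \<in> {1..length f} \<Longrightarrow> j \<in> {1..length f} \<Longrightarrow> tlt (Tw f) i j \<longleftrightarrow> letter f i < letter f j"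
  unfolding tlt_def by (auto simp add: tle_Tw)

lemma top_on_Tw: "top_on (length f) (Tw f)"
  unfolding Tw_def by (rule top_on_ptop)

lemma top_on_unique: "top_on n T \<Longrightarrow> top_on m T \<Longrightarrow> n = m"
proof -
  assume "top_on n T" "top_on m T"
  then have "topspace T = {1..n}" "topspace T = {1..m}" unfolding top_on_def by auto
  then have "{1..n} = {1..m}" by metis
  then have "card {1..n} = card {1..m}" by (rule arg_cong)
  then show "n = m" by (simp only: card_atLeastAtMost)
qed

lemma lin_ext_Tw: assumes p: "packed f" shows "lin_ext (Tw f) = {f}"
proof
  show "{f} \<subseteq> lin_ext (Tw f)"
    unfolding lin_ext_def using p top_on_Tw tsim_Tw tlt_Tw by auto
  show "lin_ext (Tw f) \<subseteq> {f}"
  proof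
    fix g assume g: "g \<in> lin_ext (Tw f)"
    then have len: "length g = length f" using top_on_Tw top_on_unique unfolding lin_ext_def by blast
    have "g = f"
    proof (rule packed_unique)
      show "packed g" "packed f" "length g = length f" using g p len unfolding lin_ext_def by auto
      fix i j assume ij: "i \<in> {1..length g}" "j \<in> {1..length g}"
      then have A: "letter g i = letter g j \<longleftrightarrow> letter f i = letter f j"
        and B: "letter f i < letter f j \<longrightarrow> letter g i < letter g j"
        and B': "letter f j < letter f i \<longrightarrow> letter g j < letter g i"
        using g len tsim_Tw[of i f j] tlt_Tw[of i f j] tlt_Tw[of j f i] unfolding lin_ext_def by auto
      show "letter g i \<le> letter g j \<longleftrightarrow> letter f i \<le> letter f j"
        using A B B' by linarith
    qed
    then show "g \<in> {f}" by simp
  qed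
qed

lemma packed_lists: "packed w \<Longrightarrow> w \<in> {xs. set xs \<subseteq> {1..length w} \<and> length xs = length w}"
  using packed_le_len by auto

lemma finite_gen_part: assumes "top_on n T" shows "finite (gen_part T)"
proof -
  have "gen_part T \<subseteq> {xs. set xs \<subseteq> {1..n} \<and> length xs = n}"
    using assms top_on_unique packed_lists unfolding gen_part_def by blast
  then show ?thesis by (rule finite_subset) (rule finite_lists_length_eq, simp)
qed

lemma finite_lin_ext: assumes "top_on n T" shows "finite (lin_ext T)"
proof -
  have "lin_ext T \<subseteq> {xs. set xs \<subseteq> {1..n} \<and> length xs = n}"
    using assms top_on_unique packed_lists unfolding lin_ext_def by blast
  then show ?thesis by (rule finite_subset) (rule finite_lists_length_eq, simp)
qed


lemma letter_map_upt: "i \<in> {1..n} \<Longrightarrow> letter (map g [1..<n+1]) i = g i"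
  unfolding letter_def by (subst nth_map) (auto simp del: upt_Suc)

lemma pack_exists:
  assumes tot: "\<And>i j. i \<in> {1..n} \<Longrightarrow> j \<in> {1..n} \<Longrightarrow> R i j \<or> R j i"
    and tr: "\<And>i j k. i \<in> {1..n} \<Longrightarrow> j \<in> {1..n} \<Longrightarrow> k \<in> {1..n} \<Longrightarrow> R i j \<Longrightarrow> R j k \<Longrightarrow> R i k"
  shows "\<exists>f. packed f \<and> length f = n \<and> (\<forall>i\<in>{1..n}. \<forall>j\<in>{1..n}. letter f i \<le> letter f j \<longleftrightarrow> R i j)"
proof -
  define u where "u i = card {k\<in>{1..n}. R k i}" for i
  have u: "u i \<le> u j \<longleftrightarrow> R i j" if ij: "i \<in> {1..n}" "j \<in> {1..n}" for i j
  proof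
    assume "R i j"
    then have "{k\<in>{1..n}. R k i} \<subseteq> {k\<in>{1..n}. R k j}" using tr ij by blast
    then show "u i \<le> u j" unfolding u_def by (intro card_mono) auto
  next
    assume le: "u i \<le> u j"
    show "R i j"
    proof (rule ccontr)
      assume nR: "\<not> R i j"
      then have Rji: "R j i" using tot ij by blast
      have "{k\<in>{1..n}. R k j} \<subset> {k\<in>{1..n}. R k i}"
      proof
        show "{k\<in>{1..n}. R k j} \<subseteq> {k\<in>{1..n}. R k i}" using tr ij Rji by blast
        have "R i i" using tot ij by blast
        then show "{k\<in>{1..n}. R k j} \<noteq> {k\<in>{1..n}. R k i}" using nR ij by blast
      qed
      then have "u j < u i" unfolding u_def by (intro psubset_card_mono) auto
      then show False using le by simp
    qed
  qed
  define U where "U = u ` {1..n}"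
  have finU: "finite U" unfolding U_def by simp
  define c where "c a = card {x\<in>U. x \<le> a}" for a
  have cmono: "c a \<le> c b" if "a \<le> b" for a b
    unfolding c_def using that finU by (intro card_mono) auto
  have cstrict: "c a < c b" if "a < b" "b \<in> U" for a b
  proof -
    have "{x\<in>U. x \<le> a} \<subseteq> {x\<in>U. x \<le> b}" "b \<in> {x\<in>U. x \<le> b}" "b \<notin> {x\<in>U. x \<le> a}"
      using that by auto
    then have "{x\<in>U. x \<le> a} \<subset> {x\<in>U. x \<le> b}" by blast
    then show ?thesis unfolding c_def using finU by (intro psubset_card_mono) auto
  qed
  have c_iff: "c a \<le> c b \<longleftrightarrow> a \<le> b" if "a \<in> U" "b \<in> U" for a b
    using cmono cstrict that by (meson not_le)
  have inj: "inj_on c U"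
    by (rule inj_onI) (metis c_iff order_refl le_antisym)
  have sub: "c ` U \<subseteq> {1..card U}"
  proof
    fix y assume "y \<in> c ` U"
    then obtain a where a: "a \<in> U" "y = c a" by auto
    have "{x\<in>U. x \<le> a} \<noteq> {}" using a by auto
    then have "1 \<le> c a" unfolding c_def using finU by (simp add: Suc_leI card_gt_0_iff)
    moreover have "c a \<le> card U" unfolding c_def using finU by (intro card_mono) auto
    ultimately show "y \<in> {1..card U}" using a by simp
  qed
  have cU: "c ` U = {1..card U}"
    by (rule card_subset_eq) (use sub inj card_image in auto)
  define f where "f = map (\<lambda>i. c (u i)) [1..<n+1]"
  have lf: "letter f i = c (u i)" if "i \<in> {1..n}" for i
    unfolding f_def using letter_map_upt[OF that] by simp
  have "set f = c ` U" unfolding f_def U_def by auto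
  then have "packed f" unfolding packed_def using cU by blast
  moreover have "length f = n" unfolding f_def by simp
  moreover have "\<forall>i\<in>{1..n}. \<forall>j\<in>{1..n}. letter f i \<le> letter f j \<longleftrightarrow> R i j"
    using lf c_iff u unfolding U_def by auto
  ultimately show ?thesis by blast
qed


definition noinv :: "(nat \<Rightarrow> nat \<Rightarrow> bool) \<Rightarrow> nat topology \<Rightarrow> nat list \<Rightarrow> bool" where
  "noinv lt T w \<longleftrightarrow> (\<forall>i\<in>{1..length w}. \<forall>j\<in>{1..length w}.
      tlt T i j \<and> letter w i = letter w j \<longrightarrow> lt i j)"

definition noint :: "(nat \<Rightarrow> nat \<Rightarrow> bool) \<Rightarrow> nat topology \<Rightarrow> nat list \<Rightarrow> bool" where
  "noint lt T w \<longleftrightarrow> (\<forall>i\<in>{1..length w}. \<forall>j\<in>{1..length w}. \<forall>k\<in>{1..length w}.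
      \<not> (lt i j \<and> lt j k \<and> tsim T i k \<and> \<not> tsim T i j \<and> \<not> tsim T j k \<and>
         letter w i = letter w j \<and> letter w j = letter w k))"

definition cnd :: "(nat \<Rightarrow> nat \<Rightarrow> bool) \<Rightarrow> nat topology \<Rightarrow> nat list \<Rightarrow> bool" where
  "cnd lt T w \<longleftrightarrow> w \<in> gen_part T \<and> noinv lt T w \<and> noint lt T w"

lemma tle_cases: "tle T i j \<Longrightarrow> tsim T i j \<or> tlt T i j"
  unfolding tsim_def tlt_def by blast

lemma tsim_tle: "tsim T i j \<Longrightarrow> tle T i j" unfolding tsim_def by blast
lemma tlt_tle: "tlt T i j \<Longrightarrow> tle T i j" unfolding tlt_def by blast

lemma lin_extD:
  assumes "f \<in> lin_ext T"
  shows "packed f" "top_on (length f) T"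
    "\<And>i j. i \<in> {1..length f} \<Longrightarrow> j \<in> {1..length f} \<Longrightarrow> letter f i = letter f j \<longleftrightarrow> tsim T i j"
    "\<And>i j. i \<in> {1..length f} \<Longrightarrow> j \<in> {1..length f} \<Longrightarrow> tlt T i j \<Longrightarrow> letter f i < letter f j"
  using assms unfolding lin_ext_def by auto

lemma lin_ext_le:
  assumes "f \<in> lin_ext T" "i \<in> {1..length f}" "j \<in> {1..length f}" "tle T i j"
  shows "letter f i \<le> letter f j"
  using tle_cases[OF assms(4)] lin_extD[OF assms(1)] assms(2,3) by fastforce

lemma gen_partD:
  assumes "w \<in> gen_part T"
  shows "packed w" "top_on (length w) T"
    "\<And>i j. i \<in> {1..length w} \<Longrightarrow> j \<in> {1..length w} \<Longrightarrow> tle T i j \<Longrightarrow> letter w i \<le> letter w j"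
  using assms unfolding gen_part_def by auto

lemma gen_part_Tw:
  "w \<in> gen_part (Tw f) \<longleftrightarrow> packed w \<and> length w = length f \<and>
     (\<forall>i\<in>{1..length w}. \<forall>j\<in>{1..length w}. letter f i \<le> letter f j \<longrightarrow> letter w i \<le> letter w j)"
proof -
  have "top_on (length w) (Tw f) \<longleftrightarrow> length w = length f"
    using top_on_Tw top_on_unique by metis
  then show ?thesis unfolding gen_part_def using tle_Tw by auto
qed

lemma claim1:
  assumes f: "f \<in> lin_ext T" and c: "cnd lt (Tw f) w"
  shows "cnd lt T w"
proof -
  note F = lin_extD[OF f]
  have wg: "w \<in> gen_part (Tw f)" and ni: "noinv lt (Tw f) w" and nt: "noint lt (Tw f) w"
    using c unfolding cnd_def by auto
  have len: "length w = length f" and pw: "packed w"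
    and mono: "\<And>i j. i \<in> {1..length w} \<Longrightarrow> j \<in> {1..length w} \<Longrightarrow> letter f i \<le> letter f j \<Longrightarrow> letter w i \<le> letter w j"
    using wg unfolding gen_part_Tw by auto
  have "w \<in> gen_part T"
    unfolding gen_part_def using pw F(2) len mono lin_ext_le[OF f] by auto
  moreover have "noinv lt T w"
    unfolding noinv_def
  proof (intro ballI impI)
    fix i j assume ij: "i \<in> {1..length w}" "j \<in> {1..length w}" and h: "tlt T i j \<and> letter w i = letter w j"
    then have "tlt (Tw f) i j" using F(4) len tlt_Tw by auto
    then show "lt i j" using ni ij h unfolding noinv_def by auto
  qed
  moreover have "noint lt T w"
    unfolding noint_def
  proof (intro ballI notI)
    fix i j k assume ijk: "i \<in> {1..length w}" "j \<in> {1..length w}" "k \<in> {1..length w}"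
      and h: "lt i j \<and> lt j k \<and> tsim T i k \<and> \<not> tsim T i j \<and> \<not> tsim T j k \<and>
         letter w i = letter w j \<and> letter w j = letter w k"
    then have "tsim (Tw f) i k" "\<not> tsim (Tw f) i j" "\<not> tsim (Tw f) j k"
      using F(3) len tsim_Tw by auto
    then show False using nt ijk h unfolding noint_def by blast
  qed
  ultimately show ?thesis unfolding cnd_def by simp
qed

lemma claim2:
  assumes irr: "\<And>i. \<not> lt i i" and trn: "\<And>i j k. lt i j \<Longrightarrow> lt j k \<Longrightarrow> lt i k"
    and f: "f \<in> lin_ext T" and g: "g \<in> lin_ext T"
    and cf: "cnd lt (Tw f) w" and cg: "cnd lt (Tw g) w"
  shows "f = g"
proof -
  note F = lin_extD[OF f] and G = lin_extD[OF g]
  have lf: "length w = length f" and pf: "\<And>i j. i \<in> {1..length w} \<Longrightarrow> j \<in> {1..length w} \<Longrightarrow> letter f i \<le> letter f j \<Longrightarrow> letter w i \<le> letter w j"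
    using cf unfolding cnd_def gen_part_Tw by auto
  have lg: "length w = length g" and pg: "\<And>i j. i \<in> {1..length w} \<Longrightarrow> j \<in> {1..length w} \<Longrightarrow> letter g i \<le> letter g j \<Longrightarrow> letter w i \<le> letter w j"
    using cg unfolding cnd_def gen_part_Tw by auto
  have nif: "noinv lt (Tw f) w" and nig: "noinv lt (Tw g) w" using cf cg unfolding cnd_def by auto
  have key: "letter g i \<le> letter g j"
    if ij: "i \<in> {1..length w}" "j \<in> {1..length w}" and le: "letter f i \<le> letter f j"
    and F: "f \<in> lin_ext T" "g \<in> lin_ext T" "length w = length f" "length w = length g"
    and pf: "\<And>i j. i \<in> {1..length w} \<Longrightarrow> j \<in> {1..length w} \<Longrightarrow> letter f i \<le> letter f j \<Longrightarrow> letter w i \<le> letter w j"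
    and pg: "\<And>i j. i \<in> {1..length w} \<Longrightarrow> j \<in> {1..length w} \<Longrightarrow> letter g i \<le> letter g j \<Longrightarrow> letter w i \<le> letter w j"
    and nif: "noinv lt (Tw f) w" and nig: "noinv lt (Tw g) w"
    for i j f g
  proof (cases "letter f i = letter f j")
    case True
    then have "tsim T i j" using lin_extD(3)[OF F(1)] ij F(3) by auto
    then have "letter g i = letter g j" using lin_extD(3)[OF F(2)] ij F(4) by auto
    then show ?thesis by simp
  next
    case False
    then have lt1: "letter f i < letter f j" using le by simp
    show ?thesis
    proof (rule ccontr)
      assume "\<not> letter g i \<le> letter g j"
      then have lt2: "letter g j < letter g i" by simp
      have "letter w i \<le> letter w j" using pf ij lt1 by simp
      moreover have "letter w j \<le> letter w i" using pg ij lt2 by simp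
      ultimately have eqw: "letter w i = letter w j" by simp
      have "tlt (Tw f) i j" using tlt_Tw lt1 ij F(3) by auto
      then have "lt i j" using nif ij eqw unfolding noinv_def by auto
      moreover have "tlt (Tw g) j i" using tlt_Tw lt2 ij F(4) by auto
      then have "lt j i" using nig ij eqw unfolding noinv_def by auto
      ultimately show False using irr trn by blast
    qed
  qed
  show ?thesis
  proof (rule packed_unique)
    show "packed f" "packed g" "length f = length g" using F G lf lg by auto
    fix i j assume ij: "i \<in> {1..length f}" "j \<in> {1..length f}"
    show "letter f i \<le> letter f j \<longleftrightarrow> letter g i \<le> letter g j"
    proof
      assume "letter f i \<le> letter f j"
      then show "letter g i \<le> letter g j"
        using key[of i j f g] ij lf lg f g pf pg nif nig by auto
    next
      assume "letter g i \<le> letter g j"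
      then show "letter f i \<le> letter f j"
        using key[of i j g f] ij lf lg f g pf pg nif nig by auto
    qed
  qed
qed


lemma claim3:
  assumes irr: "\<And>i. \<not> lt i i" and trn: "\<And>i j k. lt i j \<Longrightarrow> lt j k \<Longrightarrow> lt i k"
    and tot: "\<And>i j. i \<noteq> j \<Longrightarrow> lt i j \<or> lt j i"
    and c: "cnd lt T w"
  shows "\<exists>f\<in>lin_ext T. cnd lt (Tw f) w"
proof -
  define n where "n = length w"
  have wg: "w \<in> gen_part T" and ni: "noinv lt T w" and nt: "noint lt T w" using c unfolding cnd_def by auto
  note W = gen_partD[OF wg]
  have asym: "lt i j \<Longrightarrow> \<not> lt j i" for i j using irr trn by blast
  have simw: "letter w i = letter w j" if "i \<in> {1..n}" "j \<in> {1..n}" "tsim T i j" for i j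
    using W(3)[of i j] W(3)[of j i] that tsim_tle tsim_sym n_def by (metis le_antisym)
  define R where "R i j \<longleftrightarrow> letter w i < letter w j \<or> (letter w i = letter w j \<and> (tsim T i j \<or> lt i j))" for i j
  have Rtot: "R i j \<or> R j i" for i j
    unfolding R_def using tot[of i j] tsim_sym by (cases "i = j") auto
  have Rtr: "R i k" if ijk: "i \<in> {1..n}" "j \<in> {1..n}" "k \<in> {1..n}" and r: "R i j" "R j k" for i j k
  proof (cases "letter w i = letter w j \<and> letter w j = letter w k")
    case False
    then show ?thesis using r unfolding R_def by auto
  next
    case True
    then have w1: "letter w i = letter w j" and w2: "letter w j = letter w k" by auto
    have a: "tsim T i j \<or> lt i j" and b: "tsim T j k \<or> lt j k" using r True unfolding R_def by auto
    have "tsim T i k \<or> lt i k"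
    proof (rule ccontr)
      assume nk: "\<not> (tsim T i k \<or> lt i k)"
      then have "i \<noteq> k" by auto
      then have lki: "lt k i" using tot nk by blast
      show False
      proof (cases "tsim T i j")
        case True
        then have nlt: "\<not> tsim T j k" using nk tsim_trans by blast
        then have "lt j k" using b by simp
        moreover have "\<not> tsim T k i" using nk tsim_sym by blast
        ultimately show False using nt ijk lki tsim_sym[OF True] nlt w1 w2 n_def
          unfolding noint_def by (metis tsim_sym)
      next
        case False
        then have lij: "lt i j" using a by simp
        show False
        proof (cases "tsim T j k")
          case True
          have "\<not> tsim T k i" using nk tsim_sym by blast
          moreover have "\<not> tsim T i j" using False .
          ultimately show False using nt ijk lki lij True w1 w2 n_def
            unfolding noint_def by (metis tsim_sym)
        next
          case False
          then have "lt j k" using b by simp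
          then show False using lij lki trn irr by blast
        qed
      qed
    qed
    then show ?thesis unfolding R_def using w1 w2 by simp
  qed
  obtain f where pf: "packed f" and lf: "length f = n"
    and fR: "\<forall>i\<in>{1..n}. \<forall>j\<in>{1..n}. letter f i \<le> letter f j \<longleftrightarrow> R i j"
    using pack_exists[of n R] Rtot Rtr by blast
  have feq: "letter f i = letter f j \<longleftrightarrow> tsim T i j" if ij: "i \<in> {1..n}" "j \<in> {1..n}" for i j
  proof
    assume e: "letter f i = letter f j"
    have "letter f i \<le> letter f j" "letter f j \<le> letter f i" using e by simp_all
    then have "R i j" "R j i" using fR ij by blast+
    then show "tsim T i j" unfolding R_def using asym by (auto dest: tsim_sym)
  next
    assume s: "tsim T i j"
    then have "R i j" "R j i" unfolding R_def using simw[OF ij s] tsim_sym by auto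
    then show "letter f i = letter f j" using fR ij by (meson le_antisym)
  qed
  have flt: "letter f i < letter f j" if ij: "i \<in> {1..n}" "j \<in> {1..n}" and t: "tlt T i j" for i j
  proof -
    have le: "letter w i \<le> letter w j" using W(3) ij t tlt_tle n_def by blast
    have "R i j \<and> \<not> R j i"
    proof (cases "letter w i = letter w j")
      case True
      then have "lt i j" using ni ij t n_def unfolding noinv_def by blast
      moreover have "\<not> tsim T j i" using t unfolding tlt_def tsim_def by blast
      ultimately show ?thesis unfolding R_def using True asym by auto
    next
      case False
      then show ?thesis unfolding R_def using le by auto
    qed
    then show ?thesis using fR ij by (meson not_le)
  qed
  have "f \<in> lin_ext T"
    unfolding lin_ext_def using pf lf W(2) feq flt n_def by auto
  moreover have "cnd lt (Tw f) w"
  proof -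
    have "w \<in> gen_part (Tw f)"
      unfolding gen_part_Tw using W(1) lf n_def fR unfolding R_def by (auto simp: le_less)
    moreover have "noinv lt (Tw f) w"
      unfolding noinv_def
    proof (intro ballI impI)
      fix i j assume ij: "i \<in> {1..length w}" "j \<in> {1..length w}" and h: "tlt (Tw f) i j \<and> letter w i = letter w j"
      then have "letter f i < letter f j" using tlt_Tw lf n_def by auto
      moreover have "i \<in> {1..n}" "j \<in> {1..n}" using ij n_def by auto
      then have "letter f j \<le> letter f i \<longleftrightarrow> R j i" using fR by blast
      ultimately have "\<not> R j i" by simp
      then have "\<not> tsim T j i" "\<not> lt j i" using h unfolding R_def by auto
      then show "lt i j" using tot[of i j] by (metis tsim_refl)
    qed
    moreover have "noint lt (Tw f) w"
      unfolding noint_def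
    proof (intro ballI notI)
      fix i j k assume ijk: "i \<in> {1..length w}" "j \<in> {1..length w}" "k \<in> {1..length w}"
        and h: "lt i j \<and> lt j k \<and> tsim (Tw f) i k \<and> \<not> tsim (Tw f) i j \<and> \<not> tsim (Tw f) j k \<and>
           letter w i = letter w j \<and> letter w j = letter w k"
      then have "tsim T i k" "\<not> tsim T i j" "\<not> tsim T j k"
        using feq tsim_Tw lf n_def by auto
      then show False using nt ijk h unfolding noint_def by blast
    qed
    ultimately show ?thesis unfolding cnd_def by simp
  qed
  ultimately show ?thesis by blast
qed

lemma card_cnd:
  assumes irr: "\<And>i. \<not> lt i i" and trn: "\<And>i j k. lt i j \<Longrightarrow> lt j k \<Longrightarrow> lt i k"
    and tot: "\<And>i j. i \<noteq> j \<Longrightarrow> lt i j \<or> lt j i"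
  shows "card {f\<in>lin_ext T. cnd lt (Tw f) w} = (if cnd lt T w then 1 else 0)"
proof (cases "cnd lt T w")
  case True
  have "\<exists>f\<in>lin_ext T. cnd lt (Tw f) w"
    by (rule claim3[where lt=lt]) (fact irr | fact trn | fact tot | fact True)+
  then obtain f where f: "f \<in> lin_ext T" "cnd lt (Tw f) w" by blast
  have u: "g = f" if "g \<in> lin_ext T" "cnd lt (Tw g) w" for g
    by (rule claim2[where lt=lt and T=T and w=w]) (use irr trn that f in auto)
  have "{f\<in>lin_ext T. cnd lt (Tw f) w} = {f}"
    using f u by blast
  then show ?thesis using True by simp
next
  case False
  then have "{f\<in>lin_ext T. cnd lt (Tw f) w} = {}" using claim1 by blast
  then show ?thesis using False by (metis card.empty)
qed


lemma fin_pairs: "finite {(i, j). i \<in> A \<and> j \<in> A \<and> P i j}" if "finite A" for A :: "nat set"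
  by (rule finite_subset[of _ "A \<times> A"]) (use that in auto)

lemma fin_triples: "finite {(i, j, k). i \<in> A \<and> j \<in> A \<and> k \<in> A \<and> P i j k}" if "finite A" for A :: "nat set"
  by (rule finite_subset[of _ "A \<times> A \<times> A"]) (use that in auto)

lemma pw2: "(\<not> (tlt T i j \<and> i > j \<and> e)) \<longleftrightarrow> (tlt T i j \<and> e \<longrightarrow> i < j)"
  by (cases "i = j") auto

lemma pw1: "(\<not> (tlt T i j \<and> i < j \<and> e)) \<longleftrightarrow> (tlt T i j \<and> e \<longrightarrow> j < i)"
  by (cases "i = j") auto

lemma ell2_zero: "ell2 T w = 0 \<longleftrightarrow> noinv (\<lambda>i j. i < j) T w"
proof -
  have "ell2 T w = 0 \<longleftrightarrow> {(i, j). i \<in> {1..length w} \<and> j \<in> {1..length w} \<and>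
      tlt T i j \<and> i > j \<and> letter w i = letter w j} = {}"
    unfolding ell2_def by (rule card_0_eq) (rule fin_pairs, simp)
  also have "\<dots> \<longleftrightarrow> (\<forall>i\<in>{1..length w}. \<forall>j\<in>{1..length w}. \<not> (tlt T i j \<and> i > j \<and> letter w i = letter w j))"
    by blast
  also have "\<dots> \<longleftrightarrow> noinv (\<lambda>i j. i < j) T w"
    unfolding noinv_def pw2 by (rule refl)
  finally show ?thesis .
qed

lemma ell1_zero: "ell1 T w = 0 \<longleftrightarrow> noinv (\<lambda>i j. j < i) T w"
proof -
  have "ell1 T w = 0 \<longleftrightarrow> {(i, j). i \<in> {1..length w} \<and> j \<in> {1..length w} \<and>
      tlt T i j \<and> i < j \<and> letter w i = letter w j} = {}"
    unfolding ell1_def by (rule card_0_eq) (rule fin_pairs, simp)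
  also have "\<dots> \<longleftrightarrow> (\<forall>i\<in>{1..length w}. \<forall>j\<in>{1..length w}. \<not> (tlt T i j \<and> i < j \<and> letter w i = letter w j))"
    by blast
  also have "\<dots> \<longleftrightarrow> noinv (\<lambda>i j. j < i) T w"
    unfolding noinv_def pw1 by (rule refl)
  finally show ?thesis .
qed

lemma ell3_zero_lt: "ell3 T w = 0 \<longleftrightarrow> noint (\<lambda>i j. i < j) T w"
proof -
  have "ell3 T w = 0 \<longleftrightarrow> {(i, j, k). i \<in> {1..length w} \<and> j \<in> {1..length w} \<and> k \<in> {1..length w} \<and>
      i < j \<and> j < k \<and> tsim T i k \<and> \<not> tsim T i j \<and> \<not> tsim T j k \<and>
      letter w i = letter w j \<and> letter w j = letter w k} = {}"
    unfolding ell3_def by (rule card_0_eq) (rule fin_triples, simp)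
  also have "\<dots> \<longleftrightarrow> noint (\<lambda>i j. i < j) T w"
    unfolding noint_def by blast
  finally show ?thesis .
qed

lemma ell3_zero_gt: "ell3 T w = 0 \<longleftrightarrow> noint (\<lambda>i j. j < i) T w"
proof -
  have "noint (\<lambda>i j. i < j) T w \<longleftrightarrow> noint (\<lambda>i j. j < i) T w"
  proof
    assume A: "noint (\<lambda>i j. i < j) T w"
    show "noint (\<lambda>i j. j < i) T w" unfolding noint_def
    proof (intro ballI notI)
      fix i j k assume ijk: "i \<in> {1..length w}" "j \<in> {1..length w}" "k \<in> {1..length w}"
        and h: "j < i \<and> k < j \<and> tsim T i k \<and> \<not> tsim T i j \<and> \<not> tsim T j k \<and>
         letter w i = letter w j \<and> letter w j = letter w k"
      then have "tsim T k i" "\<not> tsim T k j" "\<not> tsim T j i" using tsim_sym by blast+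
      moreover have "\<not> (k < j \<and> j < i \<and> tsim T k i \<and> \<not> tsim T k j \<and> \<not> tsim T j i \<and>
         letter w k = letter w j \<and> letter w j = letter w i)"
        using A ijk unfolding noint_def by blast
      ultimately show False using h by auto
    qed
  next
    assume A: "noint (\<lambda>i j. j < i) T w"
    show "noint (\<lambda>i j. i < j) T w" unfolding noint_def
    proof (intro ballI notI)
      fix i j k assume ijk: "i \<in> {1..length w}" "j \<in> {1..length w}" "k \<in> {1..length w}"
        and h: "i < j \<and> j < k \<and> tsim T i k \<and> \<not> tsim T i j \<and> \<not> tsim T j k \<and>
         letter w i = letter w j \<and> letter w j = letter w k"
      then have "tsim T k i" "\<not> tsim T k j" "\<not> tsim T j i" using tsim_sym by blast+
      moreover have "\<not> (j < k \<and> i < j \<and> tsim T k i \<and> \<not> tsim T k j \<and> \<not> tsim T j i \<and>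
         letter w k = letter w j \<and> letter w j = letter w i)"
        using A ijk unfolding noint_def by blast
      ultimately show False using h by auto
    qed
  qed
  then show ?thesis using ell3_zero_lt by simp
qed

lemma G100: "Gamma_basis (1::'a::field) 0 0 T w = (if cnd (\<lambda>i j. i < j) T w then 1 else 0)"
  unfolding Gamma_basis_def cnd_def ell2_zero[symmetric] ell3_zero_lt[symmetric]
  by (simp add: power_0_left)

lemma G010: "Gamma_basis (0::'a::field) 1 0 T w = (if cnd (\<lambda>i j. j < i) T w then 1 else 0)"
  unfolding Gamma_basis_def cnd_def ell1_zero[symmetric] ell3_zero_gt[symmetric]
  by (simp add: power_0_left)

lemma sum_indicator_card:
  "finite A \<Longrightarrow> (\<Sum>x\<in>A. (if P x then 1 else 0::'a::field)) = of_nat (card {x\<in>A. P x})"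
proof -
  assume "finite A"
  have "{x\<in>A. P x} = A \<inter> Collect P" by blast
  then show ?thesis using \<open>finite A\<close> by (simp add: sum.If_cases)
qed

lemma KI_gen:
  assumes irr: "\<And>i. \<not> lt i i" and trn: "\<And>i j k. lt i j \<Longrightarrow> lt j k \<Longrightarrow> lt i k"
    and tot: "\<And>i j. i \<noteq> j \<Longrightarrow> lt i j \<or> lt j i"
    and fin: "finite (lin_ext T)"
  shows "(if cnd lt T w then 1 else (0::'a::field)) = (\<Sum>f\<in>lin_ext T. if cnd lt (Tw f) w then 1 else 0)"
proof -
  have c: "card {f\<in>lin_ext T. cnd lt (Tw f) w} = (if cnd lt T w then 1 else 0)"
    by (rule card_cnd) (fact irr | fact trn | fact tot)+
  show ?thesis unfolding sum_indicator_card[OF fin] c by simp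
qed

lemma KI100:
  assumes "is_fintop T"
  shows "Gamma_basis (1::'a::field) 0 0 T w = (\<Sum>f\<in>lin_ext T. Gamma_basis 1 0 0 (Tw f) w)"
proof -
  have fin: "finite (lin_ext T)" using assms finite_lin_ext unfolding is_fintop_def by blast
  show ?thesis unfolding G100 by (rule KI_gen) (use fin in auto)
qed

lemma KI010:
  assumes "is_fintop T"
  shows "Gamma_basis (0::'a::field) 1 0 T w = (\<Sum>f\<in>lin_ext T. Gamma_basis 0 1 0 (Tw f) w)"
proof -
  have fin: "finite (lin_ext T)" using assms finite_lin_ext unfolding is_fintop_def by blast
  show ?thesis unfolding G010 by (rule KI_gen) (use fin in auto)
qed


lemma exists_phi:
  fixes q1 q2 q3 :: "'a::field"
  assumes KI: "\<And>T w. is_fintop T \<Longrightarrow> Gamma_basis q1 q2 q3 T w = (\<Sum>f\<in>lin_ext T. Gamma_basis q1 q2 q3 (Tw f) w)"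
  shows "\<exists>\<phi>. linear_endo_WQSym \<phi> \<and>
            (\<forall>x\<in>(HT :: (nat topology \<Rightarrow> 'a) set). \<phi> (L_map x) = Gamma_map q1 q2 q3 x)"
proof -
  define G where "G v = Gamma_basis q1 q2 q3 (Tw v)" for v
  define \<phi> where "\<phi> y = (\<lambda>w. \<Sum>v\<in>{v. y v \<noteq> 0}. y v * G v w)" for y :: "nat list \<Rightarrow> 'a"
  have phi_sup: "\<phi> y w = (\<Sum>v\<in>V. y v * G v w)" if "finite V" "{v. y v \<noteq> 0} \<subseteq> V" for y V w
    unfolding \<phi>_def by (rule sum.mono_neutral_left) (use that in auto)
  have Gsupp: "{w. G v w \<noteq> 0} \<subseteq> gen_part (Tw v)" for v
    unfolding G_def Gamma_basis_def by auto
  have Gfin: "finite (gen_part (Tw v))" for v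
    by (rule finite_gen_part[OF top_on_Tw])
  have gp_packed: "w \<in> gen_part T \<Longrightarrow> packed w" for w T unfolding gen_part_def by auto
  have lin: "linear_endo_WQSym \<phi>"
    unfolding linear_endo_WQSym_def
  proof (intro conjI ballI allI)
    fix y :: "nat list \<Rightarrow> 'a" assume y: "y \<in> WQSym"
    have finy: "finite {v. y v \<noteq> 0}" using y unfolding WQSym_def by auto
    have sub: "{w. \<phi> y w \<noteq> 0} \<subseteq> (\<Union>v\<in>{v. y v \<noteq> 0}. gen_part (Tw v))"
    proof
      fix w assume "w \<in> {w. \<phi> y w \<noteq> 0}"
      then have "(\<Sum>v\<in>{v. y v \<noteq> 0}. y v * G v w) \<noteq> 0" unfolding \<phi>_def by simp
      then obtain v where "v \<in> {v. y v \<noteq> 0}" "y v * G v w \<noteq> 0" by (meson sum.neutral)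
      then show "w \<in> (\<Union>v\<in>{v. y v \<noteq> 0}. gen_part (Tw v))" using Gsupp by auto
    qed
    have "finite {w. \<phi> y w \<noteq> 0}"
      by (rule finite_subset[OF sub]) (use finy Gfin in auto)
    moreover have "packed w" if "\<phi> y w \<noteq> 0" for w
      using sub that gp_packed by blast
    ultimately show "\<phi> y \<in> WQSym" unfolding WQSym_def by auto
  next
    fix x y :: "nat list \<Rightarrow> 'a" assume x: "x \<in> WQSym" and y: "y \<in> WQSym"
    define V where "V = {v. x v \<noteq> 0} \<union> {v. y v \<noteq> 0}"
    have finV: "finite V" using x y unfolding V_def WQSym_def by auto
    show "\<phi> (\<lambda>w. x w + y w) = (\<lambda>w. \<phi> x w + \<phi> y w)"
    proof
      fix w
      have "\<phi> (\<lambda>w. x w + y w) w = (\<Sum>v\<in>V. (x v + y v) * G v w)"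
        by (rule phi_sup[OF finV]) (auto simp: V_def)
      also have "\<dots> = (\<Sum>v\<in>V. x v * G v w) + (\<Sum>v\<in>V. y v * G v w)"
        by (simp add: distrib_right sum.distrib)
      also have "\<dots> = \<phi> x w + \<phi> y w"
        using phi_sup[OF finV, of x w] phi_sup[OF finV, of y w] by (auto simp: V_def)
      finally show "\<phi> (\<lambda>w. x w + y w) w = \<phi> x w + \<phi> y w" .
    qed
  next
    fix c :: 'a and x :: "nat list \<Rightarrow> 'a" assume x: "x \<in> WQSym"
    define V where "V = {v. x v \<noteq> 0}"
    have finV: "finite V" using x unfolding V_def WQSym_def by auto
    show "\<phi> (\<lambda>w. c * x w) = (\<lambda>w. c * \<phi> x w)"
    proof
      fix w
      have "\<phi> (\<lambda>w. c * x w) w = (\<Sum>v\<in>V. (c * x v) * G v w)"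
        by (rule phi_sup[OF finV]) (auto simp: V_def)
      also have "\<dots> = c * (\<Sum>v\<in>V. x v * G v w)"
        by (simp add: sum_distrib_left mult.assoc)
      also have "\<dots> = c * \<phi> x w"
        using phi_sup[OF finV, of x w] by (auto simp: V_def)
      finally show "\<phi> (\<lambda>w. c * x w) w = c * \<phi> x w" .
    qed
  qed
  have main: "\<phi> (L_map x) = Gamma_map q1 q2 q3 x" if x: "x \<in> HT" for x :: "nat topology \<Rightarrow> 'a"
  proof
    fix w
    define S where "S = {T. x T \<noteq> 0}"
    have finS: "finite S" and fint: "\<And>T. T \<in> S \<Longrightarrow> is_fintop T"
      using x unfolding S_def HT_def by auto
    have finL: "finite (lin_ext T)" if "T \<in> S" for T
      using fint[OF that] finite_lin_ext unfolding is_fintop_def by blast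
    define V where "V = (\<Union>T\<in>S. lin_ext T)"
    have finV: "finite V" unfolding V_def using finS finL by auto
    have Lx: "L_map x v = (\<Sum>T\<in>S. x T * L_basis T v)" for v
      unfolding L_map_def S_def by simp
    have suppL: "{v. L_map x v \<noteq> 0} \<subseteq> V"
    proof
      fix v assume "v \<in> {v. L_map x v \<noteq> 0}"
      then have "(\<Sum>T\<in>S. x T * L_basis T v) \<noteq> 0" using Lx by simp
      then obtain T where "T \<in> S" "x T * L_basis T v \<noteq> 0" by (meson sum.neutral)
      then show "v \<in> V" unfolding V_def L_basis_def by (auto split: if_splits)
    qed
    have inner: "(\<Sum>v\<in>V. L_basis T v * G v w) = Gamma_basis q1 q2 q3 T w" if T: "T \<in> S" for T
    proof -
      have "(\<Sum>v\<in>V. L_basis T v * G v w) = (\<Sum>v\<in>lin_ext T. L_basis T v * G v w)"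
        by (rule sum.mono_neutral_right[OF finV]) (use T in \<open>auto simp: V_def L_basis_def\<close>)
      also have "\<dots> = (\<Sum>v\<in>lin_ext T. G v w)"
        by (rule sum.cong) (auto simp: L_basis_def)
      also have "\<dots> = Gamma_basis q1 q2 q3 T w"
        unfolding G_def using KI[OF fint[OF T], of w] by simp
      finally show ?thesis .
    qed
    have "\<phi> (L_map x) w = (\<Sum>v\<in>V. L_map x v * G v w)"
      by (rule phi_sup[OF finV suppL])
    also have "\<dots> = (\<Sum>v\<in>V. \<Sum>T\<in>S. x T * (L_basis T v * G v w))"
      unfolding Lx by (simp add: sum_distrib_right mult.assoc)
    also have "\<dots> = (\<Sum>T\<in>S. \<Sum>v\<in>V. x T * (L_basis T v * G v w))"
      by (rule sum.swap)
    also have "\<dots> = (\<Sum>T\<in>S. x T * Gamma_basis q1 q2 q3 T w)"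
      by (rule sum.cong) (simp_all add: sum_distrib_left[symmetric] inner)
    also have "\<dots> = Gamma_map q1 q2 q3 x w"
      unfolding Gamma_map_def S_def by simp
    finally show "\<phi> (L_map x) w = Gamma_map q1 q2 q3 x w" .
  qed
  show ?thesis using lin main by blast
qed


lemma Tw_inj: "packed f \<Longrightarrow> packed g \<Longrightarrow> Tw f = Tw g \<Longrightarrow> f = g"
  using lin_ext_Tw by (metis singleton_inject)

lemma is_fintop_Tw: "is_fintop (Tw f)"
  unfolding is_fintop_def using top_on_Tw by blast

lemma necessary:
  fixes q1 q2 q3 :: "'a::field"
  assumes lin: "linear_endo_WQSym \<phi>"
    and h: "\<forall>x\<in>(HT :: (nat topology \<Rightarrow> 'a) set). \<phi> (L_map x) = Gamma_map q1 q2 q3 x"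
    and T: "is_fintop T"
  shows "Gamma_basis q1 q2 q3 T w = (\<Sum>f\<in>lin_ext T. Gamma_basis q1 q2 q3 (Tw f) w)"
proof -
  define E where "E = lin_ext T"
  have finE: "finite E" using T finite_lin_ext unfolding is_fintop_def E_def by blast
  have packE: "packed f" if "f \<in> E" for f using that unfolding E_def lin_ext_def by auto
  have injE: "inj_on Tw E" by (rule inj_onI) (use Tw_inj packE in blast)
  show ?thesis
  proof (cases "T \<in> Tw ` E")
    case True
    then obtain f where f: "f \<in> E" "T = Tw f" by blast
    have "lin_ext (Tw f) = {f}" using lin_ext_Tw packE f(1) by blast
    then have "E = {f}" unfolding E_def using f(2) by simp
    then show ?thesis using f unfolding E_def[symmetric] by simp
  next
    case False
    define x :: "nat topology \<Rightarrow> 'a" where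
      "x S = (if S = T then 1 else 0) - (if S \<in> Tw ` E then 1 else 0)" for S
    have supp: "{S. x S \<noteq> 0} = insert T (Tw ` E)"
      unfolding x_def using False by auto
    have "\<forall>S. x S \<noteq> 0 \<longrightarrow> is_fintop S"
    proof (intro allI impI)
      fix S assume "x S \<noteq> 0"
      then have "S \<in> insert T (Tw ` E)" using supp by blast
      then show "is_fintop S" using T is_fintop_Tw by blast
    qed
    then have xHT: "x \<in> HT"
      unfolding HT_def using supp finE by auto
    have sumx: "(\<Sum>S\<in>{S. x S \<noteq> 0}. x S * hh S) = hh T - (\<Sum>f\<in>E. hh (Tw f))" for hh :: "nat topology \<Rightarrow> 'a"
    proof -
      have "(\<Sum>S\<in>{S. x S \<noteq> 0}. x S * hh S) = x T * hh T + (\<Sum>S\<in>Tw ` E. x S * hh S)"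
        unfolding supp using False finE by (simp add: sum.insert)
      also have "(\<Sum>S\<in>Tw ` E. x S * hh S) = (\<Sum>S\<in>Tw ` E. - hh S)"
        by (rule sum.cong) (use False in \<open>auto simp: x_def\<close>)
      also have "\<dots> = (\<Sum>f\<in>E. - hh (Tw f))" by (rule sum.reindex[OF injE, unfolded comp_def])
      also have "x T = 1" unfolding x_def using False by simp
      finally show ?thesis by (simp add: sum_negf)
    qed
    have L0: "L_map x = (\<lambda>v. 0)"
    proof
      fix v
      have "L_map x v = L_basis T v - (\<Sum>f\<in>E. L_basis (Tw f) v)"
        unfolding L_map_def by (rule sumx)
      also have "(\<Sum>f\<in>E. L_basis (Tw f) v) = (\<Sum>f\<in>E. if f = v then 1 else 0)"
        by (rule sum.cong) (use lin_ext_Tw packE in \<open>auto simp: L_basis_def\<close>)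
      also have "\<dots> = (if v \<in> E then 1 else 0)" using finE by simp
      finally show "L_map x v = 0" unfolding L_basis_def E_def by simp
    qed
    have z: "(\<lambda>w. 0) \<in> (WQSym :: (nat list \<Rightarrow> 'a) set)" unfolding WQSym_def by simp
    have hom: "\<forall>c. \<forall>x\<in>WQSym. \<phi> (\<lambda>w. c * x w) = (\<lambda>w. c * \<phi> x w)"
      using lin unfolding linear_endo_WQSym_def by blast
    have phi0: "\<phi> (\<lambda>w. 0) = (\<lambda>w. 0)" using hom[rule_format, OF z, of 0] by simp
    have "Gamma_map q1 q2 q3 x = (\<lambda>w. 0)" using h xHT L0 phi0 by metis
    then have "Gamma_map q1 q2 q3 x w = 0" by simp
    moreover have "Gamma_map q1 q2 q3 x w = Gamma_basis q1 q2 q3 T w - (\<Sum>f\<in>E. Gamma_basis q1 q2 q3 (Tw f) w)"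
      unfolding Gamma_map_def by (rule sumx)
    ultimately show ?thesis unfolding E_def by simp
  qed
qed


lemma at2: "{1..2::nat} = {1,2}" by auto
lemma at3: "{1..3::nat} = {1,2,3}" by auto
lemma upt3: "[1..<3::nat] = [1,2]" by (simp add: upt_rec)
lemma upt4: "[1..<4::nat] = [1,2,3]" by (simp add: upt_rec)

lemma pairs_list: "{(i,j). i\<in>{1..n} \<and> j\<in>{1..n} \<and> P i j} =
   set (filter (\<lambda>(i,j). P i j) (List.product [1..<n+1] [1..<n+1]))"
  by auto

lemma triples_list: "{(i,j,k). i\<in>{1..n} \<and> j\<in>{1..n} \<and> k\<in>{1..n} \<and> P i j k} =
   set (filter (\<lambda>(i,j,k). P i j k) (List.product [1..<n+1] (List.product [1..<n+1] [1..<n+1])))"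
  by auto

definition T1 :: "nat topology" where "T1 = ptop 2 (\<lambda>i j. i = j)"
definition T2 :: "nat topology" where "T2 = ptop 3 (\<lambda>i j. i = j \<or> (i = 1 \<and> j = 3))"
definition T3 :: "nat topology" where "T3 = ptop 3 (\<lambda>i j. i = j \<or> (i = 1 \<and> j = 3) \<or> (i = 3 \<and> j = 1))"

lemma tle_T1: "i \<in> {1..2} \<Longrightarrow> j \<in> {1..2} \<Longrightarrow> tle T1 i j \<longleftrightarrow> i = j"
  unfolding T1_def by (rule tle_ptop) auto
lemma tle_T2: "i \<in> {1..3} \<Longrightarrow> j \<in> {1..3} \<Longrightarrow> tle T2 i j \<longleftrightarrow> i = j \<or> (i = 1 \<and> j = 3)"
  unfolding T2_def by (rule tle_ptop) auto
lemma tle_T3: "i \<in> {1..3} \<Longrightarrow> j \<in> {1..3} \<Longrightarrow> tle T3 i j \<longleftrightarrow> i = j \<or> (i = 1 \<and> j = 3) \<or> (i = 3 \<and> j = 1)"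
  unfolding T3_def by (rule tle_ptop) auto

lemma tsim_T1: "i \<in> {1..2} \<Longrightarrow> j \<in> {1..2} \<Longrightarrow> tsim T1 i j \<longleftrightarrow> i = j"
  proof -
  assume a: "i \<in> {1..2}" "j \<in> {1..2}"
  then have c: "i = 1 \<or> i = 2" "j = 1 \<or> j = 2" by auto
  show ?thesis using tle_T1[OF a] tle_T1[OF a(2) a(1)] c unfolding tsim_def by (elim disjE) simp_all
qed
lemma tlt_T1: "i \<in> {1..2} \<Longrightarrow> j \<in> {1..2} \<Longrightarrow> tlt T1 i j \<longleftrightarrow> False"
  proof -
  assume a: "i \<in> {1..2}" "j \<in> {1..2}"
  then have c: "i = 1 \<or> i = 2" "j = 1 \<or> j = 2" by auto
  show ?thesis using tle_T1[OF a] tle_T1[OF a(2) a(1)] c unfolding tlt_def by (elim disjE) simp_all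
qed
lemma tsim_T2: "i \<in> {1..3} \<Longrightarrow> j \<in> {1..3} \<Longrightarrow> tsim T2 i j \<longleftrightarrow> i = j"
  proof -
  assume a: "i \<in> {1..3}" "j \<in> {1..3}"
  then have c: "i = 1 \<or> i = 2 \<or> i = 3" "j = 1 \<or> j = 2 \<or> j = 3" by auto
  show ?thesis using tle_T2[OF a] tle_T2[OF a(2) a(1)] c unfolding tsim_def by (elim disjE) simp_all
qed
lemma tlt_T2: "i \<in> {1..3} \<Longrightarrow> j \<in> {1..3} \<Longrightarrow> tlt T2 i j \<longleftrightarrow> i = 1 \<and> j = 3"
  proof -
  assume a: "i \<in> {1..3}" "j \<in> {1..3}"
  then have c: "i = 1 \<or> i = 2 \<or> i = 3" "j = 1 \<or> j = 2 \<or> j = 3" by auto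
  show ?thesis using tle_T2[OF a] tle_T2[OF a(2) a(1)] c unfolding tlt_def by (elim disjE) simp_all
qed
lemma tsim_T3: "i \<in> {1..3} \<Longrightarrow> j \<in> {1..3} \<Longrightarrow> tsim T3 i j \<longleftrightarrow> i = j \<or> (i = 1 \<and> j = 3) \<or> (i = 3 \<and> j = 1)"
  proof -
  assume a: "i \<in> {1..3}" "j \<in> {1..3}"
  then have c: "i = 1 \<or> i = 2 \<or> i = 3" "j = 1 \<or> j = 2 \<or> j = 3" by auto
  show ?thesis using tle_T3[OF a] tle_T3[OF a(2) a(1)] c unfolding tsim_def by (elim disjE) simp_all
qed
lemma tlt_T3: "i \<in> {1..3} \<Longrightarrow> j \<in> {1..3} \<Longrightarrow> tlt T3 i j \<longleftrightarrow> False"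
  proof -
  assume a: "i \<in> {1..3}" "j \<in> {1..3}"
  then have c: "i = 1 \<or> i = 2 \<or> i = 3" "j = 1 \<or> j = 2 \<or> j = 3" by auto
  show ?thesis using tle_T3[OF a] tle_T3[OF a(2) a(1)] c unfolding tlt_def by (elim disjE) simp_all
qed

lemma top_T1: "top_on 2 T1" unfolding T1_def by (rule top_on_ptop)
lemma top_T2: "top_on 3 T2" unfolding T2_def by (rule top_on_ptop)
lemma top_T3: "top_on 3 T3" unfolding T3_def by (rule top_on_ptop)

lemma packedI: "set f = {1..m} \<Longrightarrow> packed f" unfolding packed_def by blast

lemma packed_down: "packed f \<Longrightarrow> x \<in> set f \<Longrightarrow> 1 \<le> y \<Longrightarrow> y \<le> x \<Longrightarrow> y \<in> set f"
proof -
  assume "packed f" "x \<in> set f" "1 \<le> y" "y \<le> x"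
  moreover obtain m where "set f = {1..m}" using \<open>packed f\<close> unfolding packed_def by blast
  ultimately show "y \<in> set f" by simp
qed

lemma len2: "length f = 2 \<Longrightarrow> f = [letter f 1, letter f 2]"
  by (rule nth_equalityI) (auto simp: letter_def less_Suc_eq numeral_eq_Suc)
lemma len3: "length f = 3 \<Longrightarrow> f = [letter f 1, letter f 2, letter f 3]"
  by (rule nth_equalityI) (auto simp: letter_def less_Suc_eq numeral_eq_Suc)


lemma lin_ext_I2: "packed f \<Longrightarrow> top_on 2 T \<Longrightarrow> length f = 2 \<Longrightarrow>
   (\<forall>i\<in>{1,2}. \<forall>j\<in>{1,2}. (letter f i = letter f j \<longleftrightarrow> tsim T i j) \<and> (tlt T i j \<longrightarrow> letter f i < letter f j))
   \<Longrightarrow> f \<in> lin_ext T"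
proof -
  assume a: "packed f" "top_on 2 T" "length f = 2"
    "\<forall>i\<in>{1,2}. \<forall>j\<in>{1,2}. (letter f i = letter f j \<longleftrightarrow> tsim T i j) \<and> (tlt T i j \<longrightarrow> letter f i < letter f j)"
  show ?thesis unfolding lin_ext_def mem_Collect_eq a(3) at2 using a by blast
qed

lemma lin_ext_I3: "packed f \<Longrightarrow> top_on 3 T \<Longrightarrow> length f = 3 \<Longrightarrow>
   (\<forall>i\<in>{1,2,3}. \<forall>j\<in>{1,2,3}. (letter f i = letter f j \<longleftrightarrow> tsim T i j) \<and> (tlt T i j \<longrightarrow> letter f i < letter f j))
   \<Longrightarrow> f \<in> lin_ext T"
proof -
  assume a: "packed f" "top_on 3 T" "length f = 3"
    "\<forall>i\<in>{1,2,3}. \<forall>j\<in>{1,2,3}. (letter f i = letter f j \<longleftrightarrow> tsim T i j) \<and> (tlt T i j \<longrightarrow> letter f i < letter f j)"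
  show ?thesis unfolding lin_ext_def mem_Collect_eq a(3) at3 using a by blast
qed

lemma lin_ext_T1: "lin_ext T1 = {[1,2],[2,1]}"
proof
  show "lin_ext T1 \<subseteq> {[1,2],[2,1]}"
  proof
    fix f assume f: "f \<in> lin_ext T1"
    note F = lin_extD[OF f]
    have len: "length f = 2" using F(2) top_T1 top_on_unique by blast
    define a where "a = letter f 1"
    define b where "b = letter f 2"
    have fe: "f = [a,b]" unfolding a_def b_def using len2[OF len] .
    have "a \<in> set f" "b \<in> set f" using fe by auto
    then have ab: "1 \<le> a" "a \<le> 2" "1 \<le> b" "b \<le> 2"
      using packed_le_len[OF F(1), of a] packed_le_len[OF F(1), of b] len by auto
    have "a \<noteq> b" using F(3)[of 1 2] tsim_T1[of 1 2] len unfolding a_def b_def by simp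
    then show "f \<in> {[1,2],[2,1]}" using ab fe by auto
  qed
  show "{[1,2],[2,1]} \<subseteq> lin_ext T1"
  proof -
    have p1: "packed [1,2::nat]" by (rule packedI[of _ 2]) (auto simp: at2)
    have p2: "packed [2,1::nat]" by (rule packedI[of _ 2]) (auto simp: at2)
    show ?thesis using p1 p2
      by (auto intro!: lin_ext_I2[OF _ top_T1] simp: tsim_T1 tlt_T1 letter_def)
  qed
qed

lemma lin_ext_T2: "lin_ext T2 = {[1,2,3],[1,3,2],[2,1,3]}"
proof
  show "lin_ext T2 \<subseteq> {[1,2,3],[1,3,2],[2,1,3]}"
  proof
    fix f assume f: "f \<in> lin_ext T2"
    note F = lin_extD[OF f]
    have len: "length f = 3" using F(2) top_T2 top_on_unique by blast
    define a where "a = letter f 1"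
    define b where "b = letter f 2"
    define c where "c = letter f 3"
    have fe: "f = [a,b,c]" unfolding a_def b_def c_def using len3[OF len] .
    have "a \<in> set f" "b \<in> set f" "c \<in> set f" using fe by auto
    then have abc: "1 \<le> a" "a \<le> 3" "1 \<le> b" "b \<le> 3" "1 \<le> c" "c \<le> 3"
      using packed_le_len[OF F(1), of a] packed_le_len[OF F(1), of b] packed_le_len[OF F(1), of c] len by auto
    have "a \<noteq> b" using F(3)[of 1 2] tsim_T2[of 1 2] len unfolding a_def b_def by simp
    moreover have "b \<noteq> c" using F(3)[of 2 3] tsim_T2[of 2 3] len unfolding b_def c_def by simp
    moreover have "a \<noteq> c" using F(3)[of 1 3] tsim_T2[of 1 3] len unfolding a_def c_def by simp
    moreover have "a < c" using F(4)[of 1 3] tlt_T2[of 1 3] len unfolding a_def c_def by simp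
    ultimately show "f \<in> {[1,2,3],[1,3,2],[2,1,3]}" using abc fe by auto
  qed
  show "{[1,2,3],[1,3,2],[2,1,3]} \<subseteq> lin_ext T2"
  proof -
    have p3: "packed [1,2,3::nat]" by (rule packedI[of _ 3]) (auto simp: at3)
    have p4: "packed [1,3,2::nat]" by (rule packedI[of _ 3]) (auto simp: at3)
    have p5: "packed [2,1,3::nat]" by (rule packedI[of _ 3]) (auto simp: at3)
    show ?thesis using p3 p4 p5
      by (auto intro!: lin_ext_I3[OF _ top_T2] simp: tsim_T2 tlt_T2 letter_def)
  qed
qed

lemma lin_ext_T3: "lin_ext T3 = {[1,2,1],[2,1,2]}"
proof
  show "lin_ext T3 \<subseteq> {[1,2,1],[2,1,2]}"
  proof
    fix f assume f: "f \<in> lin_ext T3"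
    note F = lin_extD[OF f]
    have len: "length f = 3" using F(2) top_T3 top_on_unique by blast
    define a where "a = letter f 1"
    define b where "b = letter f 2"
    define c where "c = letter f 3"
    have fe: "f = [a,b,c]" unfolding a_def b_def c_def using len3[OF len] .
    have "a \<in> set f" "b \<in> set f" using fe by auto
    then have abc: "1 \<le> a" "a \<le> 3" "1 \<le> b" "b \<le> 3"
      using packed_le_len[OF F(1), of a] packed_le_len[OF F(1), of b] len by auto
    have ab: "a \<noteq> b" using F(3)[of 1 2] tsim_T3[of 1 2] len unfolding a_def b_def by simp
    have ac: "a = c" using F(3)[of 1 3] tsim_T3[of 1 3] len unfolding a_def c_def by simp
    have d3: "3 \<in> set f \<Longrightarrow> 2 \<in> set f" using packed_down[OF F(1), of 3 2] by simp
    have d2: "2 \<in> set f \<Longrightarrow> 1 \<in> set f" using packed_down[OF F(1), of 2 1] by simp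
    have s: "set f = {a,b}" using fe ac by auto
    have A: "a = 1 \<or> a = 2 \<or> a = 3" "b = 1 \<or> b = 2 \<or> b = 3" using abc by auto
    show "f \<in> {[1,2,1],[2,1,2]}" using A ab d3 d2 fe ac unfolding s by (elim disjE) simp_all
  qed
  show "{[1,2,1],[2,1,2]} \<subseteq> lin_ext T3"
  proof -
    have p6: "packed [1,2,1::nat]" by (rule packedI[of _ 2]) (auto simp: at2)
    have p7: "packed [2,1,2::nat]" by (rule packedI[of _ 2]) (auto simp: at2)
    show ?thesis using p6 p7
      by (auto intro!: lin_ext_I3[OF _ top_T3] simp: tsim_T3 tlt_T3 letter_def)
  qed
qed


lemma Gval: "w \<in> gen_part T \<Longrightarrow> Gamma_basis q1 q2 q3 T w = q1 ^ ell1 T w * q2 ^ ell2 T w * q3 ^ ell3 T w"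
  unfolding Gamma_basis_def by simp

lemma gen_const2: "top_on 2 T \<Longrightarrow> [1,1] \<in> gen_part T"
proof -
  assume t: "top_on 2 T"
  have l: "length [1,1::nat] = 2" by simp
  have a: "\<forall>i\<in>{1,2}. \<forall>j\<in>{1,2}. tle T i j \<longrightarrow> letter [1,1::nat] i \<le> letter [1,1] j" by (simp add: letter_def)
  have p: "packed [1,1::nat]" by (rule packedI[of _ 1]) auto
  show ?thesis unfolding gen_part_def mem_Collect_eq l at2 using a p t by blast
qed

lemma gen_const3: "top_on 3 T \<Longrightarrow> [1,1,1] \<in> gen_part T"
proof -
  assume t: "top_on 3 T"
  have l: "length [1,1,1::nat] = 3" by simp
  have a: "\<forall>i\<in>{1,2,3}. \<forall>j\<in>{1,2,3}. tle T i j \<longrightarrow> letter [1,1,1::nat] i \<le> letter [1,1,1] j" by (simp add: letter_def)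
  have p: "packed [1,1,1::nat]" by (rule packedI[of _ 1]) auto
  show ?thesis unfolding gen_part_def mem_Collect_eq l at3 using a p t by blast
qed

lemma top_Tw2: "length f = 2 \<Longrightarrow> top_on 2 (Tw f)" using top_on_Tw by metis
lemma top_Tw3: "length f = 3 \<Longrightarrow> top_on 3 (Tw f)" using top_on_Tw by metis

lemma g0: "Gamma_basis (q1::'a::field) q2 q3 T1 [1,1] = 1"
proof -
  have tp: "top_on 2 T1" by (rule top_T1) 
  have e: "ell1 T1 [1,1] = 0" "ell2 T1 [1,1] = 0" "ell3 T1 [1,1] = 0"
    unfolding ell1_def ell2_def ell3_def pairs_list triples_list by (simp_all add: tlt_T1 tsim_T1 letter_def)
  show ?thesis unfolding Gval[OF gen_const2[OF tp]] e by simp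
qed

lemma g1: "Gamma_basis (q1::'a::field) q2 q3 (Tw [1,2]) [1,1] = q1"
proof -
  have tp: "top_on 2 (Tw [1,2])" by (rule top_Tw2) (simp)
  have e: "ell1 (Tw [1,2]) [1,1] = 1" "ell2 (Tw [1,2]) [1,1] = 0" "ell3 (Tw [1,2]) [1,1] = 0"
    unfolding ell1_def ell2_def ell3_def pairs_list triples_list by (simp_all add: tlt_Tw tsim_Tw letter_def)
  show ?thesis unfolding Gval[OF gen_const2[OF tp]] e by simp
qed

lemma g2: "Gamma_basis (q1::'a::field) q2 q3 (Tw [2,1]) [1,1] = q2"
proof -
  have tp: "top_on 2 (Tw [2,1])" by (rule top_Tw2) (simp)
  have e: "ell1 (Tw [2,1]) [1,1] = 0" "ell2 (Tw [2,1]) [1,1] = 1" "ell3 (Tw [2,1]) [1,1] = 0"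
    unfolding ell1_def ell2_def ell3_def pairs_list triples_list by (simp_all add: tlt_Tw tsim_Tw letter_def)
  show ?thesis unfolding Gval[OF gen_const2[OF tp]] e by simp
qed

lemma g3: "Gamma_basis (q1::'a::field) q2 q3 T2 [1,1,1] = q1"
proof -
  have tp: "top_on 3 T2" by (rule top_T2) 
  have e: "ell1 T2 [1,1,1] = 1" "ell2 T2 [1,1,1] = 0" "ell3 T2 [1,1,1] = 0"
    unfolding ell1_def ell2_def ell3_def pairs_list triples_list by (simp_all add: tlt_T2 tsim_T2 letter_def)
  show ?thesis unfolding Gval[OF gen_const3[OF tp]] e by simp
qed

lemma g4: "Gamma_basis (q1::'a::field) q2 q3 (Tw [1,2,3]) [1,1,1] = q1^3"
proof -
  have tp: "top_on 3 (Tw [1,2,3])" by (rule top_Tw3) (simp)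
  have e: "ell1 (Tw [1,2,3]) [1,1,1] = 3" "ell2 (Tw [1,2,3]) [1,1,1] = 0" "ell3 (Tw [1,2,3]) [1,1,1] = 0"
    unfolding ell1_def ell2_def ell3_def pairs_list triples_list by (simp_all add: tlt_Tw tsim_Tw letter_def)
  show ?thesis unfolding Gval[OF gen_const3[OF tp]] e by simp
qed

lemma g5: "Gamma_basis (q1::'a::field) q2 q3 (Tw [1,3,2]) [1,1,1] = q1^2*q2"
proof -
  have tp: "top_on 3 (Tw [1,3,2])" by (rule top_Tw3) (simp)
  have e: "ell1 (Tw [1,3,2]) [1,1,1] = 2" "ell2 (Tw [1,3,2]) [1,1,1] = 1" "ell3 (Tw [1,3,2]) [1,1,1] = 0"
    unfolding ell1_def ell2_def ell3_def pairs_list triples_list by (simp_all add: tlt_Tw tsim_Tw letter_def)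
  show ?thesis unfolding Gval[OF gen_const3[OF tp]] e by simp
qed

lemma g6: "Gamma_basis (q1::'a::field) q2 q3 (Tw [2,1,3]) [1,1,1] = q1^2*q2"
proof -
  have tp: "top_on 3 (Tw [2,1,3])" by (rule top_Tw3) (simp)
  have e: "ell1 (Tw [2,1,3]) [1,1,1] = 2" "ell2 (Tw [2,1,3]) [1,1,1] = 1" "ell3 (Tw [2,1,3]) [1,1,1] = 0"
    unfolding ell1_def ell2_def ell3_def pairs_list triples_list by (simp_all add: tlt_Tw tsim_Tw letter_def)
  show ?thesis unfolding Gval[OF gen_const3[OF tp]] e by simp
qed

lemma g7: "Gamma_basis (q1::'a::field) q2 q3 T3 [1,1,1] = q3"
proof -
  have tp: "top_on 3 T3" by (rule top_T3) 
  have e: "ell1 T3 [1,1,1] = 0" "ell2 T3 [1,1,1] = 0" "ell3 T3 [1,1,1] = 1"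
    unfolding ell1_def ell2_def ell3_def pairs_list triples_list by (simp_all add: tlt_T3 tsim_T3 letter_def)
  show ?thesis unfolding Gval[OF gen_const3[OF tp]] e by simp
qed

lemma g8: "Gamma_basis (q1::'a::field) q2 q3 (Tw [1,2,1]) [1,1,1] = q1*q2*q3"
proof -
  have tp: "top_on 3 (Tw [1,2,1])" by (rule top_Tw3) (simp)
  have e: "ell1 (Tw [1,2,1]) [1,1,1] = 1" "ell2 (Tw [1,2,1]) [1,1,1] = 1" "ell3 (Tw [1,2,1]) [1,1,1] = 1"
    unfolding ell1_def ell2_def ell3_def pairs_list triples_list by (simp_all add: tlt_Tw tsim_Tw letter_def)
  show ?thesis unfolding Gval[OF gen_const3[OF tp]] e by simp
qed

lemma g9: "Gamma_basis (q1::'a::field) q2 q3 (Tw [2,1,2]) [1,1,1] = q1*q2*q3"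
proof -
  have tp: "top_on 3 (Tw [2,1,2])" by (rule top_Tw3) (simp)
  have e: "ell1 (Tw [2,1,2]) [1,1,1] = 1" "ell2 (Tw [2,1,2]) [1,1,1] = 1" "ell3 (Tw [2,1,2]) [1,1,1] = 1"
    unfolding ell1_def ell2_def ell3_def pairs_list triples_list by (simp_all add: tlt_Tw tsim_Tw letter_def)
  show ?thesis unfolding Gval[OF gen_const3[OF tp]] e by simp
qed


theorem proposition21:
  fixes q1 q2 q3 :: "'a::field"
  shows "(\<exists>\<phi>. linear_endo_WQSym \<phi> \<and>
            (\<forall>x\<in>(HT :: (nat topology \<Rightarrow> 'a) set). \<phi> (L_map x) = Gamma_map q1 q2 q3 x))
         \<longleftrightarrow> (q1, q2, q3) = (1, 0, 0) \<or> (q1, q2, q3) = (0, 1, 0)"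
proof
  assume "\<exists>\<phi>. linear_endo_WQSym \<phi> \<and>
            (\<forall>x\<in>(HT :: (nat topology \<Rightarrow> 'a) set). \<phi> (L_map x) = Gamma_map q1 q2 q3 x)"
  then obtain \<phi> where lin: "linear_endo_WQSym \<phi>"
    and h: "\<forall>x\<in>(HT :: (nat topology \<Rightarrow> 'a) set). \<phi> (L_map x) = Gamma_map q1 q2 q3 x" by blast
  have f1: "is_fintop T1" using top_T1 unfolding is_fintop_def by blast
  have f2: "is_fintop T2" using top_T2 unfolding is_fintop_def by blast
  have f3: "is_fintop T3" using top_T3 unfolding is_fintop_def by blast
  have e1: "1 = q1 + q2"
    using necessary[OF lin h f1, of "[1,1]"] g0[of q1 q2 q3] g1[of q1 q2 q3] g2[of q1 q2 q3]
    unfolding lin_ext_T1 by simp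
  have e2: "q1 = q1^3 + q1^2*q2 + q1^2*q2"
    using necessary[OF lin h f2, of "[1,1,1]"] g3[of q1 q2 q3] g4[of q1 q2 q3] g5[of q1 q2 q3] g6[of q1 q2 q3]
    unfolding lin_ext_T2 by (simp add: add.assoc)
  have e3: "q3 = q1*q2*q3 + q1*q2*q3"
    using necessary[OF lin h f3, of "[1,1,1]"] g7[of q1 q2 q3] g8[of q1 q2 q3] g9[of q1 q2 q3]
    unfolding lin_ext_T3 by simp
  have q2: "q2 = 1 - q1" using e1 by (simp add: algebra_simps)
  have "q1 * (1 - q1)^2 = 0"
  proof -
    have "q1 * (1 - q1)^2 = q1 - (q1^3 + q1^2*q2 + q1^2*q2)" unfolding q2 by (simp add: algebra_simps power2_eq_square power3_eq_cube)
    then show ?thesis using e2 by simp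
  qed
  then have "q1 = 0 \<or> q1 = 1" by simp
  then show "(q1, q2, q3) = (1, 0, 0) \<or> (q1, q2, q3) = (0, 1, 0)"
  proof
    assume "q1 = 0"
    then show ?thesis using q2 e3 by simp
  next
    assume "q1 = 1"
    then show ?thesis using q2 e3 by simp
  qed
next
  assume "(q1, q2, q3) = (1, 0, 0) \<or> (q1, q2, q3) = (0, 1, 0)"
  then show "\<exists>\<phi>. linear_endo_WQSym \<phi> \<and>
            (\<forall>x\<in>(HT :: (nat topology \<Rightarrow> 'a) set). \<phi> (L_map x) = Gamma_map q1 q2 q3 x)"
  proof
    assume "(q1, q2, q3) = (1, 0, 0)"
    then have q: "q1 = 1" "q2 = 0" "q3 = 0" by auto
    show ?thesis unfolding q by (rule exists_phi) (rule KI100)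
  next
    assume "(q1, q2, q3) = (0, 1, 0)"
    then have q: "q1 = 0" "q2 = 1" "q3 = 0" by auto
    show ?thesis unfolding q by (rule exists_phi) (rule KI010)
  qed
qed


end
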